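(* Let $\mathcal{L}(W;g)$ be a real-valued function of parameters $W=\{w^{(1)},\dots,w^{(m)}\}$ (vectors) and $g$, which is twice continuously differentiable at every point with all $w^{(j)}\neq0$, and such that each $w^{(j)}$ is scale-invariant: $\mathcal{L}(\dots,c\,w^{(j)},\dots)=\mathcal{L}(\dots,w^{(j)},\dots)$ for all $c>0$. Fix $i$ and suppose that for every $(V;g)$ with all $\|v^{(j)}\|_2=1$, the Hessian of $\mathcal{L}$ with respect to the block $w^{(i)}$ at $(V;g)$ has spectral norm at most $L^{\mathrm{vv}}_{ii}$. Then for any $W$ (with all $w^{(j)}\neq0$) and $g$, $$\left\|\nabla_{w^{(i)}}\mathcal{L}(W;g)\right\|_2\le\frac{\pi L^{\mathrm{vv}}_{ii}}{\|w^{(i)}\|_2}.$$ *)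

theory Defs
  imports "HOL-Analysis.Analysis"
begin

text \<open>The full parameter vector (all blocks w^(1..m) and g) is a point x of a
Euclidean space. Block j consists of the coordinates in the set of basis
vectors B j; blk (B j) x is the orthogonal projection of x onto that block,
i.e. the block vector w^(j) embedded in the full space.\<close>

definition blk :: "'a::euclidean_space set \<Rightarrow> 'a \<Rightarrow> 'a" where
  "blk B x = (\<Sum>b\<in>B. (x \<bullet> b) *\<^sub>R b)"

end

theory Submission
  imports Defs
begin

lemma blk_inner_basis:
  assumes "B \<subseteq> Basis" "b \<in> Basis"
  shows "blk B x \<bullet> b = (if b \<in> B then x \<bullet> b else 0)"
proof -
  have "blk B x \<bullet> b = (\<Sum>c\<in>B. (x \<bullet> c) * (c \<bullet> b))"
    unfolding blk_def by (simp add: inner_sum_left)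
  also have "\<dots> = (\<Sum>c\<in>B. if c = b then x \<bullet> c else 0)"
    using assms by (intro sum.cong) (auto simp: inner_Basis)
  also have "\<dots> = (if b \<in> B then x \<bullet> b else 0)"
    using assms finite_subset[OF assms(1)] by (simp add: sum.delta')
  finally show ?thesis .
qed

lemma blk_linear: "linear (blk B)"
  unfolding blk_def by (rule linearI) (simp_all add: inner_add_left scaleR_add_left sum.distrib scaleR_sum_right)

lemma blk_bl: "bounded_linear (blk (B::'a::euclidean_space set))"
  using blk_linear linear_conv_bounded_linear by blast

lemma blk_blk:
  assumes "B \<subseteq> Basis" "C \<subseteq> Basis"
  shows "blk B (blk C x) = blk (B \<inter> C) x"
proof (rule euclidean_eqI)
  fix b :: 'a assume b: "b \<in> Basis"
  have BC: "B \<inter> C \<subseteq> Basis" using assms by blast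
  show "blk B (blk C x) \<bullet> b = blk (B \<inter> C) x \<bullet> b"
    unfolding blk_inner_basis[OF assms(1) b] blk_inner_basis[OF assms(2) b] blk_inner_basis[OF BC b]
    by simp
qed

lemma blk_empty[simp]: "blk {} x = 0" by (simp add: blk_def)

lemma blk_inner:
  assumes "B \<subseteq> Basis"
  shows "blk B a \<bullet> h = a \<bullet> blk B h"
  unfolding blk_def inner_sum_left inner_sum_right
  by (intro sum.cong refl) (simp add: inner_commute[of h] mult.commute)

lemma inner_all_eq: "(\<And>h. a \<bullet> h = b \<bullet> (h::'a::real_inner)) \<Longrightarrow> a = b"
proof -
  assume h: "\<And>h. a \<bullet> h = b \<bullet> (h::'a::real_inner)"
  have "(a - b) \<bullet> (a - b) = 0" using h[of "a - b"] by (simp add: inner_diff_left)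
  then show "a = b" by simp
qed

theorem lemmaA1:
  fixes L :: "'a::euclidean_space \<Rightarrow> real"
    and gr :: "'a \<Rightarrow> 'a"
    and H :: "'a \<Rightarrow> 'a \<Rightarrow>\<^sub>L 'a"
    and B :: "nat \<Rightarrow> 'a set"
    and m i :: nat
    and Lvv :: real
  assumes blocks: "\<forall>j<m. B j \<subseteq> Basis"
    and disj: "\<forall>j<m. \<forall>k<m. j \<noteq> k \<longrightarrow> B j \<inter> B k = {}"
    and i: "i < m"
    and grad: "\<forall>x. (\<forall>j<m. blk (B j) x \<noteq> 0) \<longrightarrow>
                  (L has_derivative (\<lambda>h. gr x \<bullet> h)) (at x)"
    and hess: "\<forall>x. (\<forall>j<m. blk (B j) x \<noteq> 0) \<longrightarrow>
                  (gr has_derivative blinfun_apply (H x)) (at x)"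
    and hess_cont: "continuous_on {x. \<forall>j<m. blk (B j) x \<noteq> 0} H"
    and scale: "\<forall>j<m. \<forall>x. \<forall>c::real. (\<forall>k<m. blk (B k) x \<noteq> 0) \<and> c > 0 \<longrightarrow>
                  L (x + (c - 1) *\<^sub>R blk (B j) x) = L x"
    and bound: "\<forall>x. (\<forall>j<m. norm (blk (B j) x) = 1) \<longrightarrow>
                  onorm (\<lambda>h. blk (B i) (H x (blk (B i) h))) \<le> Lvv"
  shows "\<forall>x. (\<forall>j<m. blk (B j) x \<noteq> 0) \<longrightarrow>
           norm (blk (B i) (gr x)) \<le> pi * Lvv / norm (blk (B i) x)"
proof (intro allI impI)
  define D where "D = {x. \<forall>j<m. blk (B j) x \<noteq> 0}"
  have bB: "\<And>j. j<m \<Longrightarrow> B j \<subseteq> Basis" using blocks by auto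
  have lin: "\<And>j. linear (blk (B j))" by (rule blk_linear)
  have openD: "open D"
  proof -
    have "D = (\<Inter>j\<in>{..<m}. {x. blk (B j) x \<noteq> 0})" unfolding D_def by auto
    moreover have "open {x. blk (B j) x \<noteq> 0}" for j
      by (intro open_Collect_neq linear_continuous_on blk_bl continuous_on_const)
    ultimately show ?thesis by auto
  qed
  have cross: "blk (B j) (blk (B k) y) = (if j = k then blk (B k) y else 0)" if "j<m" "k<m" for j k y
    using that disj bB by (auto simp: blk_blk)
  define S where "S c k y = y + (\<Sum>j<k. (c j - 1) *\<^sub>R blk (B j) y)" for c :: "nat \<Rightarrow> real" and k y
  have blkS: "blk (B l) (S c k y) = (if l < k then c l else 1) *\<^sub>R blk (B l) y" if "l<m" "k\<le>m" for c k l y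
  proof -
    have "blk (B l) (S c k y) = blk (B l) y + (\<Sum>j<k. (c j - 1) *\<^sub>R blk (B l) (blk (B j) y))"
      unfolding S_def by (simp add: linear_add[OF lin] linear_sum[OF lin] linear_scale[OF lin])
    also have "\<dots> = blk (B l) y + (\<Sum>j<k. if l = j then (c j - 1) *\<^sub>R blk (B l) y else 0)"
      using that by (intro arg_cong2[where f="(+)"] refl sum.cong) (auto simp: cross)
    also have "\<dots> = (if l < k then c l else 1) *\<^sub>R blk (B l) y"
      by (simp add: algebra_simps)
    finally show ?thesis .
  qed
  have SD: "S c k y \<in> D" if "\<forall>j<m. c j > 0" "k \<le> m" "y \<in> D" for c k y
    using that unfolding D_def by (auto simp: blkS) (metis less_le_trans less_irrefl)
  have SL: "L (S c k y) = L y" if "\<forall>j<m. c j > 0" "k \<le> m" "y \<in> D" for c k y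
    using that(2)
  proof (induction k)
    case 0 then show ?case by (simp add: S_def)
  next
    case (Suc k)
    have "S c (Suc k) y = S c k y + (c k - 1) *\<^sub>R blk (B k) (S c k y)"
      using Suc.prems blkS[of k k c y] by (simp add: S_def)
    moreover have "L (S c k y + (c k - 1) *\<^sub>R blk (B k) (S c k y)) = L (S c k y)"
      using scale Suc.prems that SD[of c k y] unfolding D_def by auto
    ultimately show ?case using Suc by simp
  qed
  have Bi: "B i \<subseteq> Basis" using bB i by auto
  have Sder: "(S c m has_derivative S c m) (at y)" for c y
    unfolding S_def[abs_def]
    by (auto intro!: derivative_eq_intros bounded_linear.has_derivative[OF blk_bl])
  have Sblk: "S c m (blk (B i) h) = c i *\<^sub>R blk (B i) h" for c h
  proof -
    have "S c m (blk (B i) h) = blk (B i) h + (\<Sum>j<m. if i = j then (c j - 1) *\<^sub>R blk (B i) h else 0)"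
      unfolding S_def using i by (intro arg_cong2[where f="(+)"] refl sum.cong) (auto simp: cross)
    also have "\<dots> = c i *\<^sub>R blk (B i) h" using i by (simp add: algebra_simps)
    finally show ?thesis .
  qed
  have gradrel: "c i *\<^sub>R blk (B i) (gr (S c m y)) = blk (B i) (gr y)"
    if cpos: "\<forall>j<m. c j > 0" and yD: "y \<in> D" for c y
  proof -
    have d1: "((L \<circ> S c m) has_derivative ((\<lambda>h. gr (S c m y) \<bullet> h) \<circ> S c m)) (at y)"
      by (rule diff_chain_at[OF Sder]) (use grad SD[OF cpos order.refl yD] in \<open>auto simp: D_def\<close>)
    have d2: "((L \<circ> S c m) has_derivative (\<lambda>h. gr y \<bullet> h)) (at y)"
      by (rule has_derivative_transform_within_open[OF _ openD yD])
         (use grad yD SL[OF cpos order.refl] in \<open>auto simp: D_def\<close>)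
    have eq: "(\<lambda>h. gr (S c m y) \<bullet> S c m h) = (\<lambda>h. gr y \<bullet> h)"
      using has_derivative_unique[OF d1 d2] by (simp add: o_def)
    show ?thesis
    proof (rule inner_all_eq)
      fix h
      have "(c i *\<^sub>R blk (B i) (gr (S c m y))) \<bullet> h = gr (S c m y) \<bullet> S c m (blk (B i) h)"
        by (simp add: Sblk blk_inner[OF Bi])
      also have "\<dots> = blk (B i) (gr y) \<bullet> h"
        using fun_cong[OF eq, of "blk (B i) h"] by (simp add: blk_inner[OF Bi])
      finally show "(c i *\<^sub>R blk (B i) (gr (S c m y))) \<bullet> h = blk (B i) (gr y) \<bullet> h" .
    qed
  qed
  have euler: "gr y \<bullet> blk (B i) y = 0" if yD: "y \<in> D" for y
  proof -
    define w where "w = blk (B i) y"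
    have d0: "((\<lambda>c::real. y + (c - 1) *\<^sub>R w) has_derivative (\<lambda>s. s *\<^sub>R w)) (at 1)"
      by (auto intro!: derivative_eq_intros)
    have d1: "((L \<circ> (\<lambda>c::real. y + (c - 1) *\<^sub>R w)) has_derivative ((\<lambda>h. gr y \<bullet> h) \<circ> (\<lambda>s. s *\<^sub>R w))) (at 1)"
      by (rule diff_chain_at[OF d0]) (use grad yD in \<open>auto simp: D_def\<close>)
    have d2: "((L \<circ> (\<lambda>c::real. y + (c - 1) *\<^sub>R w)) has_derivative (\<lambda>s. 0)) (at 1)"
      by (rule has_derivative_transform_within_open[OF has_derivative_const, of "{0<..}"])
         (use scale i yD in \<open>auto simp: D_def w_def\<close>)
    show ?thesis
      using fun_cong[OF has_derivative_unique[OF d1 d2], of 1] by (simp add: w_def)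
  qed
  have blkii: "blk (B i) (blk (B i) h) = blk (B i) h" for h using cross[OF i i] by simp
  have circ: "norm (blk (B i) (gr V)) \<le> pi * Lvv" if unit: "\<forall>j<m. norm (blk (B j) V) = 1" for V
  proof -
    have unitD: "\<forall>j<m. norm (blk (B j) z) = 1 \<Longrightarrow> z \<in> D" for z
      unfolding D_def by auto
    have VD: "V \<in> D" using unitD unit by blast
    have blH: "bounded_linear (\<lambda>h. blk (B i) (H z (blk (B i) h)))" for z
      by (intro bounded_linear_compose[OF blk_bl] bounded_linear_compose[OF blinfun.bounded_linear_right blk_bl])
    have Lpos: "0 \<le> Lvv"
      using bound unit onorm_pos_le[OF blH[of V]] by fastforce
    define G where "G = blk (B i) (gr V)"
    show ?thesis
    proof (cases "G = 0")
      case True then show ?thesis using Lpos by (simp add: G_def)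
    next
      case False
      define v where "v = blk (B i) V"
      define u where "u = inverse (norm G) *\<^sub>R G"
      have bv: "blk (B i) v = v" and bu: "blk (B i) u = u"
        by (simp_all add: v_def u_def G_def blkii linear_scale[OF lin])
      have nv: "v \<bullet> v = 1" using unit i by (simp add: v_def norm_eq_1)
      have nu: "u \<bullet> u = 1" using False by (simp add: u_def flip: power2_norm_eq_inner)
      have vu: "v \<bullet> u = 0"
      proof -
        have "G \<bullet> v = 0" using euler[OF VD] by (simp add: G_def v_def blk_inner[OF Bi] blkii)
        then show ?thesis by (simp add: u_def inner_commute)
      qed
      have uv: "u \<bullet> v = 0" using vu by (simp add: inner_commute)
      have bj: "blk (B j) v = 0" "blk (B j) u = 0" if "j<m" "j\<noteq>i" for j
        using cross[OF that(1) i] that by (simp_all add: v_def u_def G_def linear_scale[OF lin])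
      define \<gamma> where "\<gamma> t = V - v + cos t *\<^sub>R v + sin t *\<^sub>R u" for t
      define \<gamma>' where "\<gamma>' t = cos t *\<^sub>R u - sin t *\<^sub>R v" for t
      define \<gamma>'' where "\<gamma>'' t = - (cos t *\<^sub>R v + sin t *\<^sub>R u)" for t
      have bgi: "blk (B i) (\<gamma> t) = cos t *\<^sub>R v + sin t *\<^sub>R u" for t
        unfolding \<gamma>_def by (simp add: linear_add[OF lin] linear_diff[OF lin] linear_scale[OF lin] bv bu v_def[symmetric])
      have bgj: "blk (B j) (\<gamma> t) = blk (B j) V" if "j<m" "j\<noteq>i" for j t
        unfolding \<gamma>_def using bj[OF that] by (simp add: linear_add[OF lin] linear_diff[OF lin] linear_scale[OF lin])
      have ncirc: "norm (cos t *\<^sub>R v + sin t *\<^sub>R u) = 1" for t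
        unfolding norm_eq_1 by (simp add: inner_add_left inner_add_right inner_commute nv nu vu uv
             flip: power2_eq_square)
      have ng': "norm (\<gamma>' t) = 1" for t
        unfolding norm_eq_1 \<gamma>'_def by (simp add: inner_diff_left inner_diff_right inner_commute nv nu vu uv
             flip: power2_eq_square)
      have gunit: "\<forall>j<m. norm (blk (B j) (\<gamma> t)) = 1" for t
        using unit bgi bgj ncirc by metis
      have gD: "\<gamma> t \<in> D" for t using unitD gunit by blast
      have bg': "blk (B i) (\<gamma>' t) = \<gamma>' t" for t
        unfolding \<gamma>'_def by (simp add: linear_diff[OF lin] linear_scale[OF lin] bv bu)
      have dg: "(\<gamma> has_derivative (\<lambda>s. s *\<^sub>R \<gamma>' t)) (at t)" for t
        unfolding \<gamma>_def[abs_def] \<gamma>'_def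
        by (auto intro!: derivative_eq_intros simp: algebra_simps)
      have dg': "(\<gamma>' has_derivative (\<lambda>s. s *\<^sub>R \<gamma>'' t)) (at t)" for t
        unfolding \<gamma>''_def[abs_def] \<gamma>'_def[abs_def]
        by (auto intro!: derivative_eq_intros simp: algebra_simps)
      define d where "d t = gr (\<gamma> t) \<bullet> \<gamma>' t" for t
      have df: "((\<lambda>t. L (\<gamma> t)) has_real_derivative d t) (at t)" for t
      proof -
        have "((L \<circ> \<gamma>) has_derivative ((\<lambda>h. gr (\<gamma> t) \<bullet> h) \<circ> (\<lambda>s. s *\<^sub>R \<gamma>' t))) (at t)"
          by (rule diff_chain_at[OF dg]) (use grad gD in \<open>auto simp: D_def\<close>)
        from this[unfolded comp_def[of L \<gamma>]] show ?thesis unfolding has_field_derivative_def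
          by (rule has_derivative_eq_rhs) (auto simp: d_def o_def fun_eq_iff mult.commute)
      qed
      have dd: "(d has_real_derivative (H (\<gamma> t) (\<gamma>' t) \<bullet> \<gamma>' t)) (at t)" for t
      proof -
        have h1: "((gr \<circ> \<gamma>) has_derivative (H (\<gamma> t) \<circ> (\<lambda>s. s *\<^sub>R \<gamma>' t))) (at t)"
          by (rule diff_chain_at[OF dg]) (use hess gD in \<open>auto simp: D_def\<close>)
        have e: "gr (\<gamma> t) \<bullet> \<gamma>'' t = 0"
          using euler[OF gD[of t]] by (simp add: bgi \<gamma>''_def inner_add_right inner_diff_right)
        have "((\<lambda>t. (gr \<circ> \<gamma>) t \<bullet> \<gamma>' t) has_derivative
           (\<lambda>h. (gr \<circ> \<gamma>) t \<bullet> (h *\<^sub>R \<gamma>'' t) + (H (\<gamma> t) \<circ> (\<lambda>s. s *\<^sub>R \<gamma>' t)) h \<bullet> \<gamma>' t)) (at t)"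
          by (rule has_derivative_inner[OF h1 dg'])
        from this[unfolded comp_def[of gr \<gamma>]] show ?thesis unfolding has_field_derivative_def d_def[abs_def]
          by (rule has_derivative_eq_rhs) (auto simp: o_def fun_eq_iff e blinfun.scaleR_right mult.commute)
      qed
      have hb: "\<bar>H (\<gamma> t) (\<gamma>' t) \<bullet> \<gamma>' t\<bar> \<le> Lvv" for t
      proof -
        have "H (\<gamma> t) (\<gamma>' t) \<bullet> \<gamma>' t = blk (B i) (H (\<gamma> t) (blk (B i) (\<gamma>' t))) \<bullet> \<gamma>' t"
          by (simp add: bg' blk_inner[OF Bi])
        also have "\<bar>\<dots>\<bar> \<le> norm (blk (B i) (H (\<gamma> t) (blk (B i) (\<gamma>' t)))) * norm (\<gamma>' t)"
          by (rule Cauchy_Schwarz_ineq2)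
        also have "\<dots> \<le> onorm (\<lambda>h. blk (B i) (H (\<gamma> t) (blk (B i) h))) * norm (\<gamma>' t)"
          using onorm[OF blH[of "\<gamma> t"], of "\<gamma>' t"] ng' by simp
        also have "\<dots> \<le> Lvv" using bound gunit[of t] ng' by simp
        finally show ?thesis .
      qed
      have "\<gamma> (-pi) = \<gamma> pi" by (simp add: \<gamma>_def)
      moreover have "continuous_on {-pi..pi} (\<lambda>t. L (\<gamma> t))"
        using df by (intro continuous_at_imp_continuous_on ballI DERIV_isCont) 
      ultimately obtain z where z: "-pi < z" "z < pi" "(*) (d z) = (\<lambda>v. 0)"
        using Rolle_deriv[of "-pi" pi "\<lambda>t. L (\<gamma> t)" "\<lambda>t. (*) (d t)"] df
        unfolding has_field_derivative_def by auto
      have dz: "d z = 0" using fun_cong[OF z(3), of 1] by simp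
      have d0: "d 0 = norm G"
      proof -
        have "d 0 = gr V \<bullet> u" by (simp add: d_def \<gamma>_def \<gamma>'_def)
        also have "\<dots> = G \<bullet> u" by (metis G_def blk_inner[OF Bi] bu)
        also have "\<dots> = norm G" using False
          by (simp add: u_def flip: power2_norm_eq_inner) (simp add: power2_eq_square)
        finally show ?thesis .
      qed
      have "\<bar>d 0 - d z\<bar> \<le> Lvv * \<bar>z\<bar>"
      proof (cases z "0::real" rule: linorder_cases)
        case less
        obtain w where "d 0 - d z = (0 - z) * (H (\<gamma> w) (\<gamma>' w) \<bullet> \<gamma>' w)"
          using MVT2[OF less, of d "\<lambda>t. H (\<gamma> t) (\<gamma>' t) \<bullet> \<gamma>' t"] dd by blast
        then show ?thesis using hb[of w] less by (simp add: abs_mult mult.commute mult_left_mono)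
      next
        case greater
        obtain w where "d z - d 0 = (z - 0) * (H (\<gamma> w) (\<gamma>' w) \<bullet> \<gamma>' w)"
          using MVT2[OF greater, of d "\<lambda>t. H (\<gamma> t) (\<gamma>' t) \<bullet> \<gamma>' t"] dd by blast
        then have "\<bar>d 0 - d z\<bar> = \<bar>z\<bar> * \<bar>H (\<gamma> w) (\<gamma>' w) \<bullet> \<gamma>' w\<bar>"
          by (metis abs_minus_commute abs_mult diff_zero)
        then show ?thesis using hb[of w] greater by (simp add: mult.commute mult_left_mono)
      qed simp
      also have "\<dots> \<le> Lvv * pi" using z Lpos by (intro mult_left_mono) auto
      finally show ?thesis using d0 dz by (simp add: G_def mult.commute)
    qed
  qed
  fix x assume xD0: "\<forall>j<m. blk (B j) x \<noteq> 0"
  define c where "c j = 1 / norm (blk (B j) x)" for j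
  have cpos: "\<forall>j<m. c j > 0" using xD0 by (simp add: c_def)
  have ci: "c i > 0" using cpos i by blast
  have xD: "x \<in> D" using xD0 by (simp add: D_def)
  have un: "norm (blk (B j) (S c m x)) = 1" if "j<m" for j
  proof -
    have "norm (blk (B j) (S c m x)) = norm (c j *\<^sub>R blk (B j) x)"
      using blkS[OF that order.refl, of c x] that by simp
    also have "\<dots> = 1" using xD0 that by (simp add: c_def)
    finally show ?thesis .
  qed
  have N: "norm (blk (B i) (gr (S c m x))) \<le> pi * Lvv" by (rule circ) (use un in blast)
  have E: "norm (blk (B i) (gr x)) = c i * norm (blk (B i) (gr (S c m x)))"
  proof -
    have "norm (blk (B i) (gr x)) = norm (c i *\<^sub>R blk (B i) (gr (S c m x)))"
      by (simp only: gradrel[OF cpos xD])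
    also have "\<dots> = c i * norm (blk (B i) (gr (S c m x)))" using ci by (simp add: abs_of_pos)
    finally show ?thesis .
  qed
  have "c i * norm (blk (B i) (gr (S c m x))) \<le> c i * (pi * Lvv)"
    by (rule mult_left_mono[OF N]) (use ci in simp)
  also have "c i * (pi * Lvv) = pi * Lvv / norm (blk (B i) x)" unfolding c_def by (metis times_divide_eq_left mult_1_left mult.commute)
  finally have F: "c i * norm (blk (B i) (gr (S c m x))) \<le> pi * Lvv / norm (blk (B i) x)" .
  show "norm (blk (B i) (gr x)) \<le> pi * Lvv / norm (blk (B i) x)" using E F by linarith
qed

end
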